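(* Let $f:\mathbb{R}^d\to\mathbb{R}$ be convex and $M$-Lipschitz with $X^*\neq\emptyset$. Run the Proximal Bundle Method with $\beta\in(0,1)$ and stepsizes $\rho_k=(f(x_k)-f^* )/D^2$, where $D^2>0$ is any number with $D^2\ge\sup\{\mathrm{dist}(x,X^* )^2: f(x)\le f(x_0)\}$. Then for any $0<\epsilon\le f(x_0)-f^*$, the number of descent steps taken before an $\epsilon$-minimizer is found is at most $$\left\lceil\frac{2\log\left(\frac{f(x_0)-f^*}{\epsilon}\right)}{\beta}\right\rceil,$$ and the number of null steps taken before then is at most $$\left(\frac{1}{1-(1-\beta/2)^2}\right)\frac{8M^2D^2}{(1-\beta)^2\epsilon^2}.$$
   Context: Throughout, $f:\mathbb{R}^d\to\mathbb{R}$ is a proper closed convex function attaining its minimum $f^*=\inf f$ on the nonempty set $X^*=\{x: f(x)=f^*\}$; $\mathrm{dist}(x,S)=\inf_{y\in S}\|x-y\|$; $\partial f(x)$ is the convex subdifferential. A subgradient oracle returns, for any $x$, the value $f(x)$ and some $g(x)\in\partial f(x)$. Proximal Bundle Method: fix $\beta\in(0,1)$, $x_0=z_0\in\mathbb{R}^d$, $g_0=g(x_0)$, and the initial model $f_0(x)=f(x_0)+\langle g_0,x-x_0\rangle$. At iteration $k\ge0$, given a convex model $f_k:\mathbb{R}^d\to\mathbb{R}$ and stepsize $\rho_k>0$, compute $z_{k+1}=\operatorname{argmin}_z f_k(z)+\frac{\rho_k}{2}\|z-x_k\|^2$. If $\beta(f(x_k)-f_k(z_{k+1}))\le f(x_k)-f(z_{k+1})$,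 iteration $k$ is a descent step and $x_{k+1}=z_{k+1}$; otherwise it is a null step and $x_{k+1}=x_k$. Then a new convex model $f_{k+1}$ and stepsize $\rho_{k+1}$ are chosen satisfying, with $g_{k+1}=g(z_{k+1})$ and $s_{k+1}=\rho_k(x_k-z_{k+1})$: (1) $f_{k+1}(x)\le f(x)$ for all $x$; (2) $f_{k+1}(x)\ge f(z_{k+1})+\langle g_{k+1},x-z_{k+1}\rangle$ for all $x$; (3) if iteration $k$ was a null step, $f_{k+1}(x)\ge f_k(z_{k+1})+\langle s_{k+1},x-z_{k+1}\rangle$ for all $x$; (4) if iteration $k$ was a null step, $\rho_{k+1}\ge\rho_k$. An $\epsilon$-minimizer is a point $x$ with $f(x)-f^*\le\epsilon$. *)

theory Defs
  imports "HOL-Analysis.Analysis"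
begin

definition fstar :: "('a \<Rightarrow> real) \<Rightarrow> real" where
  "fstar f = (INF x. f x)"

definition Xstar :: "('a \<Rightarrow> real) \<Rightarrow> 'a set" where
  "Xstar f = {x. f x = fstar f}"

definition is_subgradient :: "('a::real_inner \<Rightarrow> real) \<Rightarrow> 'a \<Rightarrow> 'a \<Rightarrow> bool" where
  "is_subgradient f x v \<longleftrightarrow> (\<forall>y. f y \<ge> f x + inner v (y - x))"

definition pbm_descent ::
  "('a \<Rightarrow> real) \<Rightarrow> real \<Rightarrow> (nat \<Rightarrow> 'a) \<Rightarrow> (nat \<Rightarrow> 'a) \<Rightarrow> (nat \<Rightarrow> 'a \<Rightarrow> real) \<Rightarrow> nat \<Rightarrow> bool" where
  "pbm_descent f \<beta> x z fm k \<longleftrightarrow>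
     \<beta> * (f (x k) - fm k (z (Suc k))) \<le> f (x k) - f (z (Suc k))"

definition pbm_step ::
  "('a::euclidean_space \<Rightarrow> real) \<Rightarrow> ('a \<Rightarrow> 'a) \<Rightarrow> real \<Rightarrow> (nat \<Rightarrow> 'a) \<Rightarrow> (nat \<Rightarrow> 'a) \<Rightarrow>
    (nat \<Rightarrow> 'a \<Rightarrow> real) \<Rightarrow> (nat \<Rightarrow> real) \<Rightarrow> nat \<Rightarrow> bool" where
  "pbm_step f g \<beta> x z fm \<rho> k \<longleftrightarrow>
     \<rho> k > 0 \<and>
     convex_on UNIV (fm k) \<and>
     (\<forall>w. fm k (z (Suc k)) + \<rho> k / 2 * (norm (z (Suc k) - x k))\<^sup>2
            \<le> fm k w + \<rho> k / 2 * (norm (w - x k))\<^sup>2) \<and>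
     x (Suc k) = (if pbm_descent f \<beta> x z fm k then z (Suc k) else x k) \<and>
     convex_on UNIV (fm (Suc k)) \<and>
     (\<forall>w. fm (Suc k) w \<le> f w) \<and>
     (\<forall>w. fm (Suc k) w \<ge> f (z (Suc k)) + inner (g (z (Suc k))) (w - z (Suc k))) \<and>
     (\<not> pbm_descent f \<beta> x z fm k \<longrightarrow>
        (\<forall>w. fm (Suc k) w \<ge> fm k (z (Suc k))
              + inner (\<rho> k *\<^sub>R (x k - z (Suc k))) (w - z (Suc k)))) \<and>
     (\<not> pbm_descent f \<beta> x z fm k \<longrightarrow> \<rho> (Suc k) \<ge> \<rho> k)"

end

theory Submission
  imports Defs
begin


lemma key_scalar:
  fixes \<rho> M \<beta> a G \<delta> V inc :: real
  assumes r: "\<rho> > 0" and M: "M > 0" and b: "0 < \<beta>" "\<beta> < 1" and a: "a \<ge> 0"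
    and G0: "0 \<le> G" and G1: "G \<le> M\<^sup>2 / (2*\<rho>)"
    and d: "\<delta> > (1-\<beta>) * (G + a\<^sup>2/(2*\<rho>))"
    and V: "0 \<le> V" "V \<le> (M+a)\<^sup>2"
    and inc: "\<And>\<theta>. 0 \<le> \<theta> \<Longrightarrow> \<theta> \<le> 1 \<Longrightarrow> inc \<ge> \<theta>*\<delta> - \<theta>\<^sup>2*V/(2*\<rho>)"
  shows "inc \<ge> (1-\<beta>)\<^sup>2 * \<rho> * G\<^sup>2 / (4*M\<^sup>2)"
proof -
  define E where "E = G + a\<^sup>2/(2*\<rho>)"
  define W where "W = (M+a)\<^sup>2"
  have Wp: "W > 0" using M a unfolding W_def by (simp add: add_pos_nonneg)
  have E0: "E \<ge> 0" using G0 r unfolding E_def by simp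
  have Erho: "E*\<rho> \<le> W"
  proof -
    have "E*\<rho> = G*\<rho> + a\<^sup>2/2" unfolding E_def using r by (simp add: field_simps)
    also have "G*\<rho> \<le> M\<^sup>2/2" using G1 r by (simp add: field_simps)
    hence "G*\<rho> + a\<^sup>2/2 \<le> M\<^sup>2/2 + a\<^sup>2/2" by simp
    also have "\<dots> \<le> W"
    proof -
      have "0 \<le> M*a" using M a by auto
      moreover have "(M+a)\<^sup>2 = M\<^sup>2 + a\<^sup>2 + 2*(M*a)" by (simp add: power2_sum)
      moreover have "0 \<le> M\<^sup>2" "0 \<le> a\<^sup>2" by auto
      ultimately show ?thesis unfolding W_def by linarith
    qed
    finally show ?thesis by simp
  qed
  define \<theta> where "\<theta> = (1-\<beta>)*E*\<rho>/W"
  have th0: "0 \<le> \<theta>" unfolding \<theta>_def using b E0 r Wp by simp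
  have th1: "\<theta> \<le> 1"
  proof -
    have "(1-\<beta>)*(E*\<rho>) \<le> 1 * W" using Erho b E0 r by (intro mult_mono) auto
    thus ?thesis unfolding \<theta>_def using Wp by (simp add: field_simps)
  qed
  have "inc \<ge> \<theta>*\<delta> - \<theta>\<^sup>2*V/(2*\<rho>)" using inc th0 th1 by blast
  moreover have "\<theta>*\<delta> \<ge> \<theta>*((1-\<beta>)*E)" using d th0 unfolding E_def by (intro mult_left_mono) auto
  moreover have "\<theta>\<^sup>2*V/(2*\<rho>) \<le> \<theta>\<^sup>2*W/(2*\<rho>)" using V r unfolding W_def
    by (intro divide_right_mono mult_left_mono) auto
  ultimately have i1: "inc \<ge> \<theta>*((1-\<beta>)*E) - \<theta>\<^sup>2*W/(2*\<rho>)" by linarith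
  have "\<theta>*((1-\<beta>)*E) - \<theta>\<^sup>2*W/(2*\<rho>) = (1-\<beta>)\<^sup>2*E\<^sup>2*\<rho>/(2*W)"
    unfolding \<theta>_def using Wp r by (simp add: field_simps power2_eq_square)
  with i1 have i2: "inc \<ge> (1-\<beta>)\<^sup>2*E\<^sup>2*\<rho>/(2*W)" by simp
  have key: "4*M*E \<ge> 3*G*(M+a)"
  proof -
    have "M*G + 2*M*a\<^sup>2/\<rho> - 3*G*a \<ge> 0"
    proof (cases "M \<ge> 3*a")
      case True
      have "G*(M - 3*a) \<ge> 0" using True G0 by simp
      moreover have "2*M*a\<^sup>2/\<rho> \<ge> 0" using M r by simp
      ultimately show ?thesis by (simp add: algebra_simps)
    next
      case False
      have "G*(M-3*a) \<ge> (M\<^sup>2/(2*\<rho>))*(M-3*a)" using False G1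
        by (intro mult_right_mono_neg) auto
      moreover have "(M\<^sup>2/(2*\<rho>))*(M-3*a) + 2*M*a\<^sup>2/\<rho> = (M/(2*\<rho>))*((M - 3/2*a)\<^sup>2 + 7/4*a\<^sup>2)"
        using r by (simp add: field_simps power2_eq_square)
      moreover have "(M/(2*\<rho>))*((M - 3/2*a)\<^sup>2 + 7/4*a\<^sup>2) \<ge> 0" using M r by simp
      ultimately show ?thesis by (simp add: algebra_simps)
    qed
    hence "4*M*(G + a\<^sup>2/(2*\<rho>)) - 3*G*(M+a) \<ge> 0" using r by (simp add: field_simps)
    thus ?thesis unfolding E_def by simp
  qed
  have "(3*G*(M+a))\<^sup>2 \<le> (4*M*E)\<^sup>2" using key G0 M a by (intro power_mono) auto
  hence k2: "9*G\<^sup>2*W \<le> 16*M\<^sup>2*E\<^sup>2" unfolding W_def by (simp add: power_mult_distrib)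
  have "(1-\<beta>)\<^sup>2 * \<rho> * G\<^sup>2 / (4*M\<^sup>2) \<le> (1-\<beta>)\<^sup>2*E\<^sup>2*\<rho>/(2*W)"
  proof -
    have "(1-\<beta>)\<^sup>2 * \<rho> * (G\<^sup>2 *(2*W)) \<le> (1-\<beta>)\<^sup>2 * \<rho> *(E\<^sup>2 * (4*M\<^sup>2))"
    proof -
      have "0 \<le> G\<^sup>2*W" using Wp by simp
      hence "G\<^sup>2*(2*W) \<le> E\<^sup>2 * (4*M\<^sup>2)" using k2 by (simp add: algebra_simps)
      thus ?thesis by (intro mult_left_mono) (auto simp: r less_imp_le)
    qed
    thus ?thesis using Wp M by (simp add: field_simps)
  qed
  with i2 show ?thesis by linarith
qed

lemma card_Suc_split:
  "card {j. j < Suc k \<and> P j} = card {j. j < k \<and> P j} + (if P k then 1 else 0)"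
proof -
  have fin: "finite {j. j < k \<and> P j}" by (rule finite_subset[of _ "{..<k}"]) auto
  show ?thesis
  proof (cases "P k")
    case True
    hence "{j. j < Suc k \<and> P j} = insert k {j. j < k \<and> P j}" by auto
    thus ?thesis using fin True by simp
  next
    case False
    hence "{j. j < Suc k \<and> P j} = {j. j < k \<and> P j}" using less_Suc_eq by auto
    thus ?thesis using False by simp
  qed
qed

lemma sum_Suc_split:
  "(\<Sum>j\<in>{j. j < Suc k \<and> P j}. F j) = (\<Sum>j\<in>{j. j < k \<and> P j}. F j) + (if P k then F k else 0)"
proof -
  have fin: "finite {j. j < k \<and> P j}" by (rule finite_subset[of _ "{..<k}"]) auto
  show ?thesis
  proof (cases "P k")
    case True
    hence "{j. j < Suc k \<and> P j} = insert k {j. j < k \<and> P j}" by auto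
    thus ?thesis using fin True by (simp add: add.commute)
  next
    case False
    hence "{j. j < Suc k \<and> P j} = {j. j < k \<and> P j}" using less_Suc_eq by auto
    thus ?thesis using False by simp
  qed
qed

lemma recip_step:
  fixes G G' c :: real
  assumes "G > 0" "G' > 0" "c \<ge> 0" "G - G' \<ge> c * G\<^sup>2"
  shows "1/G' \<ge> 1/G + c"
proof -
  have "c * G\<^sup>2 \<ge> 0" using assms by simp
  hence "G' \<le> G" using assms by linarith
  have "1/G' - 1/G = (G - G')/(G*G')" using assms by (simp add: field_simps)
  also have "\<dots> \<ge> c*G\<^sup>2/(G*G')" using assms by (intro divide_right_mono) auto
  finally have "1/G' - 1/G \<ge> c*G/G'" using assms by (simp add: power2_eq_square)
  moreover have "c*G/G' \<ge> c*G'/G'" using assms \<open>G' \<le> G\<close> by (intro divide_right_mono mult_left_mono) auto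
  moreover have "c*G'/G' = c" using assms by simp
  ultimately show ?thesis by linarith
qed

lemma alg1: fixes T D q :: real assumes "D \<noteq> 0" shows "(T + 1/D\<^sup>2)*(q*D)\<^sup>2 = q\<^sup>2*(T*D\<^sup>2 + 1)"
  using assms by (simp add: field_simps power2_eq_square)

lemma half_pos: fixes D G :: real assumes "0 < D" "D/2 \<le> G" shows "0 < G" using assms by linarith

lemma desc_count:
  fixes b e D0 :: real and n :: nat
  assumes e: "0 < e" and lt: "e < (1 - b/2)^n * D0" and b: "0 < b" "b < 1"
  shows "real n < 2 * ln (D0 / e) / b"
proof -
  have q: "0 < 1 - b/2" using b by simp
  have qn: "0 < (1 - b/2)^n" using q by simp
  have D0: "D0 > 0"
  proof (rule ccontr)
    assume "\<not> D0 > 0"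
    hence "(1 - b/2)^n * D0 \<le> 0" using qn by (simp add: mult_nonneg_nonpos)
    thus False using e lt by linarith
  qed
  have "ln e < ln ((1 - b/2)^n * D0)" using e lt qn D0 by simp
  also have "\<dots> = ln ((1 - b/2)^n) + ln D0" by (rule ln_mult_pos[OF qn D0])
  also have "ln ((1 - b/2)^n) = real n * ln (1 - b/2)" by (rule ln_realpow)
  also have "ln (1 - b/2) \<le> (1 - b/2) - 1" using q by (rule ln_le_minus_one)
  hence "real n * ln (1 - b/2) \<le> real n * (- b/2)" by (intro mult_left_mono) auto
  finally have "real n * (b/2) < ln D0 - ln e" by simp
  also have "\<dots> = ln (D0/e)" using D0 e by (simp add: ln_div)
  finally show ?thesis using b by (simp add: field_simps)
qed

lemma alg2:
  fixes D G D2 M b :: real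
  assumes "D > 0" "G > 0" "D2 > 0" "M > 0" "b < 1" "r = D/D2"
  shows "((8 * M\<^sup>2 * D2 / (1-b)\<^sup>2)/2)/D * (1/G + (1-b)\<^sup>2 * r / (4*M\<^sup>2))
       = ((8 * M\<^sup>2 * D2 / (1-b)\<^sup>2)/2)/(D*G) + 1"
  using assms by (simp add: field_simps)

locale pbm =
  fixes f :: "'a::euclidean_space \<Rightarrow> real" and g :: "'a \<Rightarrow> 'a"
    and M \<beta> D2 :: real and x z :: "nat \<Rightarrow> 'a" and fm :: "nat \<Rightarrow> 'a \<Rightarrow> real" and \<rho> :: "nat \<Rightarrow> real"
  assumes lipschitz: "M-lipschitz_on UNIV f"
    and Xstar_nonempty: "Xstar f \<noteq> {}"
    and subgrad_oracle: "\<forall>y. is_subgradient f y (g y)"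
    and beta: "0 < \<beta>" "\<beta> < 1"
    and D2_pos: "D2 > 0"
    and D2_bound: "\<forall>y. f y \<le> f (x 0) \<longrightarrow> (infdist y (Xstar f))\<^sup>2 \<le> D2"
    and init_model: "fm 0 = (\<lambda>w. f (x 0) + inner (g (x 0)) (w - x 0))"
    and stepsize: "\<forall>k. \<rho> k = (f (x k) - fstar f) / D2"
    and run: "\<forall>k. f (x k) > fstar f \<longrightarrow> pbm_step f g \<beta> x z fm \<rho> k"
begin

abbreviation "\<Delta> k \<equiv> f (x k) - fstar f"
abbreviation "h k \<equiv> fm k (z (Suc k)) + \<rho> k / 2 * (norm (z (Suc k) - x k))\<^sup>2"
abbreviation "G k \<equiv> f (x k) - h k"
abbreviation "desc k \<equiv> pbm_descent f \<beta> x z fm k"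

lemma sg: "f w \<ge> f y + inner (g y) (w - y)"
  using subgrad_oracle unfolding is_subgradient_def by blast

lemma M_nonneg: "M \<ge> 0" using lipschitz_on_nonneg[OF lipschitz] .

lemma lip: "f w - f y \<le> M * norm (w - y)"
  using lipschitz_onD[OF lipschitz, of w y] by (simp add: dist_norm dist_real_def)

lemma g_bound: "norm (g y) \<le> M"
proof -
  have "f (y + g y) \<ge> f y + inner (g y) (g y)" using sg[where w="y + g y" and y=y] by simp
  moreover have "f (y + g y) - f y \<le> M * norm (g y)" using lip[where w="y + g y" and y=y] by simp
  ultimately have "norm (g y) * norm (g y) \<le> M * norm (g y)"
    by (simp add: dot_square_norm power2_eq_square)
  show ?thesis
  proof (cases "norm (g y) = 0")
    case True thus ?thesis using M_nonneg by simp
  next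
    case False hence "norm (g y) > 0" by simp
    thus ?thesis using \<open>norm (g y) * norm (g y) \<le> M * norm (g y)\<close> by (simp add: mult_le_cancel_right_pos)
  qed
qed

lemma Xstar_closed: "closed (Xstar f)"
proof -
  have "continuous_on UNIV f" using lipschitz_on_continuous_on[OF lipschitz] .
  from continuous_closed_preimage_constant[OF this closed_UNIV, of "fstar f"]
  show ?thesis unfolding Xstar_def by simp
qed

lemma nearest: obtains p where "f p = fstar f" "dist y p = infdist y (Xstar f)"
proof -
  obtain p where "p \<in> Xstar f" "infdist y (Xstar f) = dist y p"
    using infdist_attains_inf[OF Xstar_closed Xstar_nonempty] by blast
  thus ?thesis using that unfolding Xstar_def by auto
qed

lemma fs_le: "fstar f \<le> f y"
proof -
  define B where "B = min (f (x 0)) (fstar f - (M\<^sup>2 + D2)/2)"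
  have "B \<le> f w" for w
  proof (cases "f w \<le> f (x 0)")
    case True
    obtain p where p: "f p = fstar f" "dist w p = infdist w (Xstar f)" using nearest by blast
    have d2: "(dist w p)\<^sup>2 \<le> D2" using D2_bound True p by simp
    have "f p - f w \<le> M * norm (p - w)" by (rule lip)
    also have "\<dots> = M * dist w p" by (simp add: dist_norm norm_minus_commute)
    also have "\<dots> \<le> (M\<^sup>2 + (dist w p)\<^sup>2)/2"
      using sum_squares_bound[of M "dist w p"] by (simp add: power2_eq_square)
    also have "\<dots> \<le> (M\<^sup>2 + D2)/2" using d2 by simp
    finally have "f p - f w \<le> (M\<^sup>2 + D2)/2" .
    hence "fstar f - (M\<^sup>2 + D2)/2 \<le> f w" using p by linarith
    thus ?thesis unfolding B_def by (simp add: min.coboundedI2)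
  next
    case False thus ?thesis unfolding B_def by simp
  qed
  hence "bdd_below (range f)" by (intro bdd_belowI2)
  thus ?thesis unfolding fstar_def by (simp add: cINF_lower)
qed

lemma rho_eq: "\<rho> k = \<Delta> k / D2" using stepsize by blast

lemma rho_pos: "\<Delta> k > 0 \<Longrightarrow> \<rho> k > 0" using rho_eq D2_pos by simp

lemma stepk: "\<Delta> k > 0 \<Longrightarrow> pbm_step f g \<beta> x z fm \<rho> k" using run by simp

lemma fm_le: assumes "\<forall>j<k. \<Delta> j > 0" shows "fm k w \<le> f w"
proof (cases k)
  case 0 thus ?thesis using init_model sg[where w=w and y="x 0"] by simp
next
  case (Suc j)
  hence "pbm_step f g \<beta> x z fm \<rho> j" using assms stepk by simp
  thus ?thesis unfolding pbm_step_def Suc by blast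
qed

lemma prox: "\<Delta> k > 0 \<Longrightarrow> h k \<le> fm k w + \<rho> k / 2 * (norm (w - x k))\<^sup>2"
  using stepk[of k] unfolding pbm_step_def by blast

lemma G_nonneg: assumes "\<forall>j\<le>k. \<Delta> j > 0" shows "G k \<ge> 0"
proof -
  have "h k \<le> fm k (x k)" using prox[of k "x k"] assms by simp
  also have "\<dots> \<le> f (x k)" using fm_le assms by simp
  finally show ?thesis by simp
qed

lemma G_lower: assumes "\<forall>j\<le>k. \<Delta> j > 0" "f (x k) \<le> f (x 0)" shows "G k \<ge> \<Delta> k / 2"
proof -
  obtain p where p: "f p = fstar f" "dist (x k) p = infdist (x k) (Xstar f)" using nearest by blast
  have d2: "(norm (p - x k))\<^sup>2 \<le> D2" using D2_bound assms(2) p by (simp add: dist_norm norm_minus_commute)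
  have r: "\<rho> k > 0" using assms rho_pos by simp
  have "h k \<le> fm k p + \<rho> k / 2 * (norm (p - x k))\<^sup>2" using prox assms by simp
  also have "\<dots> \<le> f p + \<rho> k / 2 * D2" using fm_le[of k p] assms d2 r
    by (intro add_mono mult_left_mono) auto
  also have "\<rho> k / 2 * D2 = \<Delta> k / 2" using rho_eq D2_pos by simp
  finally have "h k \<le> fstar f + \<Delta> k / 2" using p by simp
  thus ?thesis using [[show_types]] by (simp add: field_simps)
qed

lemma E_ge_G: "\<Delta> k > 0 \<Longrightarrow> f (x k) - fm k (z (Suc k)) \<ge> G k" using rho_pos[of k] by simp

lemma desc_step: assumes "\<forall>j\<le>k. \<Delta> j > 0" "f (x k) \<le> f (x 0)" "desc k"
  shows "\<Delta> (Suc k) \<le> (1 - \<beta>/2) * \<Delta> k"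
proof -
  have st: "pbm_step f g \<beta> x z fm \<rho> k" using assms stepk by simp
  hence xs: "x (Suc k) = z (Suc k)" using assms(3) unfolding pbm_step_def by simp
  have d: "\<beta> * (f (x k) - fm k (z (Suc k))) \<le> f (x k) - f (z (Suc k))"
    using assms(3) unfolding pbm_descent_def .
  define E where "E = f (x k) - fm k (z (Suc k))"
  define D where "D = f (x k) - fstar f"
  have "E \<ge> D / 2" using G_lower[OF assms(1,2)] E_ge_G[of k] assms(1) unfolding E_def D_def by auto
  hence "\<beta> * E \<ge> \<beta> * (D / 2)" using beta by (intro mult_left_mono) auto
  hence "f (z (Suc k)) \<le> f (x k) - \<beta> * (D / 2)" using d unfolding E_def by linarith
  hence "f (z (Suc k)) - fstar f \<le> (1 - \<beta>/2) * D" unfolding D_def by (simp add: field_simps)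
  thus ?thesis using xs unfolding D_def by simp
qed

lemma null_same: assumes "\<Delta> k > 0" "\<not> desc k" shows "x (Suc k) = x k" "\<rho> (Suc k) = \<rho> k"
proof -
  show xs: "x (Suc k) = x k" using stepk[OF assms(1)] assms(2) unfolding pbm_step_def by simp
  show "\<rho> (Suc k) = \<rho> k" using rho_eq[of k] rho_eq[of "Suc k"] xs by simp
qed

lemma mono_step: assumes "\<forall>j\<le>k. \<Delta> j > 0" shows "f (x (Suc k)) \<le> f (x k)"
proof (cases "desc k")
  case True
  have st: "pbm_step f g \<beta> x z fm \<rho> k" using assms stepk by simp
  hence xs: "x (Suc k) = z (Suc k)" using True unfolding pbm_step_def by simp
  have d: "\<beta> * (f (x k) - fm k (z (Suc k))) \<le> f (x k) - f (z (Suc k))"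
    using True unfolding pbm_descent_def .
  have "f (x k) - fm k (z (Suc k)) \<ge> 0" using G_nonneg[OF assms] E_ge_G[of k] assms by auto
  hence "\<beta> * (f (x k) - fm k (z (Suc k))) \<ge> 0" using beta by simp
  with d xs show ?thesis by simp
next
  case False thus ?thesis using null_same assms by simp
qed

lemma quad_lb: fixes r t m :: real assumes "r > 0" shows "r/2 * t\<^sup>2 - m * t \<ge> - (m\<^sup>2/(2*r))"
proof -
  have "0 \<le> (r*t - m)\<^sup>2" by simp
  hence "0 \<le> r\<^sup>2*t\<^sup>2 - 2*r*m*t + m\<^sup>2" by (simp add: power2_diff power_mult_distrib algebra_simps)
  hence "0 \<le> (r\<^sup>2*t\<^sup>2 - 2*r*m*t + m\<^sup>2)/(2*r)" using assms by simp
  also have "(r\<^sup>2*t\<^sup>2 - 2*r*m*t + m\<^sup>2)/(2*r) = r/2 * t\<^sup>2 - m * t + m\<^sup>2/(2*r)"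
    using assms by (simp add: field_simps power2_eq_square)
  finally show ?thesis by simp
qed

lemma h_base: assumes "\<Delta> k > 0" "\<forall>w. fm k w \<ge> f (x k) + inner (g (x k)) (w - x k)"
  shows "h k \<ge> f (x k) - M\<^sup>2/(2 * \<rho> k)"
proof -
  define u where "u = z (Suc k) - x k"
  have r: "\<rho> k > 0" using rho_pos assms by simp
  have "- inner (g (x k)) u = inner (- g (x k)) u" by simp
  also have "\<dots> \<le> norm (- g (x k)) * norm u" by (rule norm_cauchy_schwarz)
  also have "\<dots> \<le> M * norm u" using g_bound by (simp add: mult_right_mono)
  finally have ci: "inner (g (x k)) u \<ge> - (M * norm u)" by simp
  have "h k \<ge> f (x k) + inner (g (x k)) u + \<rho> k / 2 * (norm u)\<^sup>2"
    using assms(2) unfolding u_def by simp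
  moreover have "\<rho> k / 2 * (norm u)\<^sup>2 - M * norm u \<ge> - (M\<^sup>2/(2*\<rho> k))" using quad_lb r by blast
  ultimately show ?thesis using ci by linarith
qed

lemma compl_sq: fixes u v :: 'a and r t :: real assumes "r > 0"
  shows "r/2 * (norm u)\<^sup>2 + t * inner v u \<ge> - (t\<^sup>2 * (norm v)\<^sup>2 / (2*r))"
proof -
  have "0 \<le> (norm (r *\<^sub>R u + t *\<^sub>R v))\<^sup>2" by simp
  also have "\<dots> = inner (r *\<^sub>R u + t *\<^sub>R v) (r *\<^sub>R u + t *\<^sub>R v)" by (rule power2_norm_eq_inner)
  also have "\<dots> = r\<^sup>2 * inner u u + 2*r*t* inner v u + t\<^sup>2 * inner v v"
    by (simp add: inner_add_left inner_add_right inner_commute power2_eq_square algebra_simps)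
  also have "\<dots> = r\<^sup>2 * (norm u)\<^sup>2 + 2*r*t* inner v u + t\<^sup>2 * (norm v)\<^sup>2"
    by (simp add: power2_norm_eq_inner)
  finally have "0 \<le> (r\<^sup>2 * (norm u)\<^sup>2 + 2*r*t* inner v u + t\<^sup>2 * (norm v)\<^sup>2)/(2*r)" using assms by simp
  also have "\<dots> = r/2 * (norm u)\<^sup>2 + t * inner v u + t\<^sup>2 * (norm v)\<^sup>2 / (2*r)"
    using assms by (simp add: field_simps power2_eq_square)
  finally show ?thesis by simp
qed

lemma norm_add_sq: fixes u w :: 'a shows "(norm (u + w))\<^sup>2 = (norm u)\<^sup>2 + 2 * inner u w + (norm w)\<^sup>2"
  using dot_norm[of u w] by simp

lemma h_null:
  assumes "\<Delta> k > 0" "\<not> desc k"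
  defines "u \<equiv> z (Suc (Suc k)) - z (Suc k)"
  defines "v \<equiv> g (z (Suc k)) - \<rho> k *\<^sub>R (x k - z (Suc k))"
  shows "h (Suc k) - h k \<ge> \<rho> k / 2 * (norm u)\<^sup>2"
    and "h (Suc k) - h k \<ge> (f (z (Suc k)) - fm k (z (Suc k))) + inner v u + \<rho> k / 2 * (norm u)\<^sup>2"
proof -
  define a where "a = x k"
  define zz where "zz = z (Suc k)"
  define z2 where "z2 = z (Suc (Suc k))"
  define r where "r = \<rho> k"
  define s where "s = r *\<^sub>R (a - zz)"
  have st: "pbm_step f g \<beta> x z fm \<rho> k" using assms stepk by simp
  have xs: "x (Suc k) = a" and rs: "\<rho> (Suc k) = r" using null_same assms unfolding a_def r_def by auto
  have c3: "fm (Suc k) z2 \<ge> fm k zz + inner s (z2 - zz)"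
    using st assms(2) unfolding pbm_step_def s_def r_def a_def zz_def z2_def by blast
  have c2: "fm (Suc k) z2 \<ge> f zz + inner (g zz) (z2 - zz)"
    using st unfolding pbm_step_def zz_def z2_def by blast
  have uu: "z2 - a = u + (zz - a)" unfolding u_def z2_def zz_def by simp
  have "inner s u = - r * inner u (zz - a)" unfolding s_def
    by (simp add: inner_commute inner_diff_left inner_diff_right algebra_simps)
  hence idt: "r/2 * (norm (z2 - a))\<^sup>2 = r/2 * (norm u)\<^sup>2 - inner s u + r/2 * (norm (zz - a))\<^sup>2"
    unfolding uu norm_add_sq by (simp add: algebra_simps)
  have hS: "h (Suc k) = fm (Suc k) z2 + r/2 * (norm (z2 - a))\<^sup>2"
    using xs rs unfolding z2_def by simp
  have hk: "h k = fm k zz + r/2 * (norm (zz - a))\<^sup>2" unfolding zz_def a_def r_def by simp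
  have uz: "z2 - zz = u" unfolding u_def z2_def zz_def by simp
  have e1: "h (Suc k) - h k = fm (Suc k) z2 - fm k zz + r/2*(norm u)\<^sup>2 - inner s u"
    unfolding hS hk idt by simp
  have c3': "fm (Suc k) z2 \<ge> fm k zz + inner s u" using c3 uz by simp
  have c2': "fm (Suc k) z2 \<ge> f zz + inner (g zz) u" using c2 uz by simp
  have "h (Suc k) - h k \<ge> r / 2 * (norm u)\<^sup>2" using e1 c3' by linarith
  thus "h (Suc k) - h k \<ge> \<rho> k / 2 * (norm u)\<^sup>2" unfolding r_def .
  have iv: "inner v u = inner (g zz) u - inner s u" unfolding v_def s_def r_def a_def zz_def
    by (simp add: inner_diff_left)
  have "h (Suc k) - h k \<ge> (f zz - fm k zz) + inner v u + r / 2 * (norm u)\<^sup>2"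
    using e1 c2' iv by linarith
  thus "h (Suc k) - h k \<ge> (f (z (Suc k)) - fm k (z (Suc k))) + inner v u + \<rho> k / 2 * (norm u)\<^sup>2"
    unfolding r_def zz_def .
qed

lemma h_inc:
  assumes D: "\<Delta> k > 0" and nd: "\<not> desc k" and M: "M > 0" and G0: "0 \<le> G k" and G1: "G k \<le> M\<^sup>2/(2*\<rho> k)"
  shows "h (Suc k) - h k \<ge> (1-\<beta>)\<^sup>2 * \<rho> k * (G k)\<^sup>2 / (4*M\<^sup>2)"
proof -
  define u where "u \<equiv> z (Suc (Suc k)) - z (Suc k)"
  define v where "v \<equiv> g (z (Suc k)) - \<rho> k *\<^sub>R (x k - z (Suc k))"
  define r where "r = \<rho> k"
  define zz where "zz = z (Suc k)"
  define a where "a = x k"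
  define \<delta> where "\<delta> = f zz - fm k zz"
  define as where "as = norm (r *\<^sub>R (a - zz))"
  define X where "X = h (Suc k) - h k"
  have r: "r > 0" using rho_pos D unfolding r_def by simp
  have hn1: "X \<ge> r / 2 * (norm u)\<^sup>2" using h_null(1)[OF D nd] unfolding X_def r_def u_def .
  have hn2: "X \<ge> \<delta> + inner v u + r / 2 * (norm u)\<^sup>2" using h_null(2)[OF D nd]
    unfolding X_def r_def u_def v_def \<delta>_def zz_def .
  have incr: "X \<ge> \<theta>*\<delta> - \<theta>\<^sup>2*(norm v)\<^sup>2/(2*r)" if th: "0 \<le> \<theta>" "\<theta> \<le> 1" for \<theta>
  proof -
    define A where "A = r / 2 * (norm u)\<^sup>2"
    have "(1-\<theta>)*X \<ge> (1-\<theta>)*A" using hn1 th unfolding A_def by (intro mult_left_mono) auto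
    moreover have "\<theta>*X \<ge> \<theta>*(\<delta> + inner v u + A)" using hn2 th unfolding A_def by (intro mult_left_mono) auto
    moreover have "A + \<theta> * inner v u \<ge> - (\<theta>\<^sup>2 * (norm v)\<^sup>2 / (2*r))" using compl_sq[OF r] unfolding A_def by blast
    moreover have "(1-\<theta>)*A + \<theta>*(\<delta> + inner v u + A) = A + \<theta>*\<delta> + \<theta> * inner v u" by (simp add: algebra_simps)
    moreover have "(1-\<theta>)*X + \<theta>*X = X" by (simp add: algebra_simps)
    ultimately show ?thesis by linarith
  qed
  have as1: "as = r * norm (zz - a)" unfolding as_def using r by (simp add: norm_minus_commute)
  have asq: "as\<^sup>2/(2*r) = r/2 * (norm (zz - a))\<^sup>2"
    unfolding as1 using r by (simp add: power2_eq_square field_simps)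
  have "G k + r/2 * (norm (zz - a))\<^sup>2 = f a - fm k zz" unfolding a_def zz_def r_def by simp
  hence Geq: "G k + as\<^sup>2/(2*r) = f a - fm k zz" using asq by simp
  have "\<not> (\<beta> * (f a - fm k zz) \<le> f a - f zz)" using nd unfolding pbm_descent_def a_def zz_def .
  hence "\<delta> > (1-\<beta>)*(f a - fm k zz)" unfolding \<delta>_def by (simp add: algebra_simps)
  hence dl: "\<delta> > (1-\<beta>)*(G k + as\<^sup>2/(2*r))" unfolding Geq .
  have "norm v \<le> norm (g zz) + as" unfolding v_def as_def r_def a_def zz_def by (rule norm_triangle_ineq4)
  also have "\<dots> \<le> M + as" using g_bound by simp
  finally have "(norm v)\<^sup>2 \<le> (M + as)\<^sup>2" by (intro power_mono) auto
  have "X \<ge> (1-\<beta>)\<^sup>2 * r * (G k)\<^sup>2 / (4*M\<^sup>2)"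
    apply (rule key_scalar[of r M \<beta> as "G k" \<delta> "(norm v)\<^sup>2" X])
    using r M beta G0 G1 dl \<open>(norm v)\<^sup>2 \<le> (M + as)\<^sup>2\<close> incr unfolding r_def as_def by auto
  thus ?thesis unfolding X_def r_def .
qed

definition "qq = 1 - \<beta>/2"
definition "dd k = card {j. j < k \<and> desc j}"
definition "NN k = card {j. j < k \<and> \<not> desc j}"
definition "TT k = (\<Sum>j\<in>{j. j < k \<and> desc j}. 1 / (\<Delta> j)\<^sup>2)"
definition "CC = 8 * M\<^sup>2 * D2 / (1-\<beta>)\<^sup>2"
definition "psi k = (CC/2) / (\<Delta> k * G k)"

lemma psi_nonneg: assumes "\<Delta> k > 0" "G k \<ge> 0" shows "psi k \<ge> 0"
proof -
  have "CC \<ge> 0" unfolding CC_def using D2_pos by simp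
  moreover have "\<Delta> k * G k \<ge> 0" using assms by simp
  ultimately show ?thesis unfolding psi_def by simp
qed

lemma qq_bounds: "0 < qq" "qq < 1" using beta unfolding qq_def by auto

lemma invariant:
  assumes M: "M > 0" and pos: "\<forall>j\<le>k. \<Delta> j > 0"
  shows "f (x k) \<le> f (x 0) \<and> \<Delta> k \<le> qq^(dd k) * \<Delta> 0 \<and> TT k * (\<Delta> k)\<^sup>2 \<le> qq\<^sup>2/(1-qq\<^sup>2)
     \<and> h k \<ge> f (x k) - M\<^sup>2/(2*\<rho> k) \<and> real (NN k) \<le> psi k + CC * TT k"
  using pos
proof (induction k)
  case 0
  have D0: "\<Delta> 0 > 0" using 0 by simp
  have hb: "h 0 \<ge> f (x 0) - M\<^sup>2/(2*\<rho> 0)" using h_base[OF D0] init_model by simp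
  have "G 0 \<ge> 0" using G_nonneg 0 by simp
  hence "psi 0 \<ge> 0" using psi_nonneg D0 by simp
  moreover have "qq\<^sup>2 < 1" using qq_bounds by (simp add: power_less_one_iff)
  ultimately show ?case using hb unfolding dd_def TT_def NN_def by simp
next
  case (Suc k)
  have posk: "\<forall>j\<le>k. \<Delta> j > 0" using Suc.prems by simp
  have Dk: "\<Delta> k > 0" and DS: "\<Delta> (Suc k) > 0" using Suc.prems by auto
  note IH = Suc.IH[OF posk]
  have I1: "f (x (Suc k)) \<le> f (x 0)" using mono_step[OF posk] IH by linarith
  have Glk: "G k \<ge> \<Delta> k / 2" using G_lower[OF posk] IH by simp
  have GlS: "G (Suc k) \<ge> \<Delta> (Suc k) / 2" using G_lower[OF Suc.prems I1] .
  have q: "0 < qq" "qq < 1" by (rule qq_bounds)+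
  have q2: "qq\<^sup>2 < 1" using q by (simp add: power_less_one_iff)
  show ?case
  proof (cases "desc k")
    case True
    have dS: "dd (Suc k) = dd k + 1" unfolding dd_def using card_Suc_split[of k desc] True by simp
    have NS: "NN (Suc k) = NN k" unfolding NN_def using card_Suc_split[of k "\<lambda>j. \<not> desc j"] True by simp
    have TS: "TT (Suc k) = TT k + 1/(\<Delta> k)\<^sup>2" unfolding TT_def using sum_Suc_split[of _ k desc] True by simp
    have dstep: "\<Delta> (Suc k) \<le> qq * \<Delta> k" using desc_step[OF posk _ True] IH unfolding qq_def by simp
    have I2: "\<Delta> (Suc k) \<le> qq^(dd (Suc k)) * \<Delta> 0"
    proof -
      have "qq * \<Delta> k \<le> qq * (qq^(dd k) * \<Delta> 0)" using IH q by (intro mult_left_mono) auto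
      thus ?thesis using dstep dS by (simp add: mult.assoc)
    qed
    have I3: "TT (Suc k) * (\<Delta> (Suc k))\<^sup>2 \<le> qq\<^sup>2/(1-qq\<^sup>2)"
    proof -
      have T0: "TT k \<ge> 0" unfolding TT_def by (intro sum_nonneg) auto
      have "(\<Delta> (Suc k))\<^sup>2 \<le> (qq * \<Delta> k)\<^sup>2" using dstep DS by (intro power_mono) auto
      hence "TT (Suc k) * (\<Delta> (Suc k))\<^sup>2 \<le> TT (Suc k) * (qq * \<Delta> k)\<^sup>2"
        using T0 TS by (intro mult_left_mono) auto
      also have "\<dots> = qq\<^sup>2 * (TT k * (\<Delta> k)\<^sup>2 + 1)" unfolding TS using Dk
        by (intro alg1) simp
      also have "\<dots> \<le> qq\<^sup>2 * (qq\<^sup>2/(1-qq\<^sup>2) + 1)" using IH by (intro mult_left_mono) auto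
      also have "\<dots> = qq\<^sup>2/(1-qq\<^sup>2)" using q2 by (simp add: field_simps)
      finally show ?thesis .
    qed
    have I4: "h (Suc k) \<ge> f (x (Suc k)) - M\<^sup>2/(2*\<rho> (Suc k))"
    proof (rule h_base[OF DS])
      have st: "pbm_step f g \<beta> x z fm \<rho> k" using Dk stepk by simp
      hence "x (Suc k) = z (Suc k)" using True unfolding pbm_step_def by simp
      thus "\<forall>w. f (x (Suc k)) + inner (g (x (Suc k))) (w - x (Suc k)) \<le> fm (Suc k) w"
        using st unfolding pbm_step_def by simp
    qed
    have psik: "psi k \<le> CC / (\<Delta> k)\<^sup>2"
    proof -
      have C0: "CC \<ge> 0" unfolding CC_def using D2_pos by simp
      have "\<Delta> k * (\<Delta> k / 2) \<le> \<Delta> k * G k" using Glk Dk by (intro mult_left_mono) auto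
      moreover have "(\<Delta> k)\<^sup>2 / 2 = \<Delta> k * (\<Delta> k / 2)" by (simp add: power2_eq_square)
      ultimately have "(\<Delta> k)\<^sup>2 / 2 \<le> \<Delta> k * G k" by simp
      moreover have "G k > 0" using half_pos[OF Dk Glk] .
      hence "0 < (\<Delta> k * G k) * ((\<Delta> k)\<^sup>2 / 2)" using Dk by simp
      ultimately have "(CC/2) / (\<Delta> k * G k) \<le> (CC/2) / ((\<Delta> k)\<^sup>2 / 2)" using C0
        by (intro divide_left_mono) auto
      thus ?thesis unfolding psi_def by simp
    qed
    have psiS: "psi (Suc k) \<ge> 0" using psi_nonneg DS GlS by simp
    have "real (NN (Suc k)) \<le> psi (Suc k) + CC * TT (Suc k)"
      using IH psik psiS NS TS by (simp add: algebra_simps)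
    thus ?thesis using I1 I2 I3 I4 by blast
  next
    case False
    have dS: "dd (Suc k) = dd k" unfolding dd_def using card_Suc_split[of k desc] False by simp
    have NS: "NN (Suc k) = NN k + 1" unfolding NN_def using card_Suc_split[of k "\<lambda>j. \<not> desc j"] False by simp
    have TS: "TT (Suc k) = TT k" unfolding TT_def using sum_Suc_split[of _ k desc] False by simp
    have xs: "x (Suc k) = x k" and rs: "\<rho> (Suc k) = \<rho> k" using null_same[OF Dk False] by auto
    have hm: "h (Suc k) - h k \<ge> 0"
    proof -
      have "\<rho> k / 2 * (norm (z (Suc (Suc k)) - z (Suc k)))\<^sup>2 \<ge> 0" using rho_pos[OF Dk] by simp
      thus ?thesis using h_null(1)[OF Dk False] by linarith
    qed
    have I4: "h (Suc k) \<ge> f (x (Suc k)) - M\<^sup>2/(2*\<rho> (Suc k))" using IH hm xs rs by simp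
    have G1: "G k \<le> M\<^sup>2/(2*\<rho> k)" using IH by linarith
    have inc: "h (Suc k) - h k \<ge> (1-\<beta>)\<^sup>2 * \<rho> k * (G k)\<^sup>2 / (4*M\<^sup>2)"
      using h_inc[OF Dk False M _ G1] Glk Dk by simp
    have GS: "G (Suc k) = G k - (h (Suc k) - h k)" using xs by simp
    have Gkp: "G k > 0" using half_pos[OF Dk Glk] .
    have GSp: "G (Suc k) > 0" using half_pos[OF DS GlS] .
    have rec: "1 / G (Suc k) \<ge> 1 / G k + (1-\<beta>)\<^sup>2 * \<rho> k / (4*M\<^sup>2)"
    proof (rule recip_step[OF Gkp GSp])
      show "0 \<le> (1-\<beta>)\<^sup>2 * \<rho> k / (4*M\<^sup>2)" using rho_pos[OF Dk] by simp
      have "(1-\<beta>)\<^sup>2 * \<rho> k / (4*M\<^sup>2) * (G k)\<^sup>2 = (1-\<beta>)\<^sup>2 * \<rho> k * (G k)\<^sup>2 / (4*M\<^sup>2)" by simp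
      thus "(1-\<beta>)\<^sup>2 * \<rho> k / (4*M\<^sup>2) * (G k)\<^sup>2 \<le> G k - G (Suc k)" using inc GS by simp
    qed
    have "psi (Suc k) = (CC/2)/(\<Delta> k) * (1 / G (Suc k))" unfolding psi_def using xs by simp
    also have "\<dots> \<ge> (CC/2)/(\<Delta> k) * (1 / G k + (1-\<beta>)\<^sup>2 * \<rho> k / (4*M\<^sup>2))"
    proof (rule mult_left_mono[OF rec])
      have "CC \<ge> 0" unfolding CC_def using D2_pos by simp
      thus "0 \<le> CC/2/\<Delta> k" using Dk by simp
    qed
    also have "(CC/2)/(\<Delta> k) * (1 / G k + (1-\<beta>)\<^sup>2 * \<rho> k / (4*M\<^sup>2)) = psi k + 1"
      unfolding psi_def CC_def using alg2[OF Dk Gkp D2_pos M beta(2) rho_eq[of k]] .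
    finally have "psi (Suc k) \<ge> psi k + 1" .
    hence "real (NN (Suc k)) \<le> psi (Suc k) + CC * TT (Suc k)" using IH NS TS by simp
    thus ?thesis using I1 IH dS TS xs I4 by simp
  qed
qed

lemma psi_le: assumes pos: "\<forall>j\<le>k. \<Delta> j > 0" and f0: "f (x k) \<le> f (x 0)" shows "psi k \<le> CC / (\<Delta> k)\<^sup>2"
proof -
  have Dk: "\<Delta> k > 0" using pos by simp
  have Glk: "G k \<ge> \<Delta> k / 2" using G_lower[OF pos f0] .
  have C0: "CC \<ge> 0" unfolding CC_def using D2_pos by simp
  have "\<Delta> k * (\<Delta> k / 2) \<le> \<Delta> k * G k" using Glk Dk by (intro mult_left_mono) auto
  moreover have "(\<Delta> k)\<^sup>2 / 2 = \<Delta> k * (\<Delta> k / 2)" by (simp add: power2_eq_square)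
  ultimately have "(\<Delta> k)\<^sup>2 / 2 \<le> \<Delta> k * G k" by simp
  moreover have "G k > 0" using half_pos[OF Dk Glk] .
  hence "0 < (\<Delta> k * G k) * ((\<Delta> k)\<^sup>2 / 2)" using Dk by simp
  ultimately have "(CC/2) / (\<Delta> k * G k) \<le> (CC/2) / ((\<Delta> k)\<^sup>2 / 2)" using C0
    by (intro divide_left_mono) auto
  thus ?thesis unfolding psi_def by simp
qed

lemma bound_S:
  assumes M: "M > 0" and pos: "\<forall>j\<le>k. \<Delta> j > 0"
  shows "real (NN k) \<le> CC * (TT k + 1/(\<Delta> k)\<^sup>2)" "TT k + 1/(\<Delta> k)\<^sup>2 \<le> 1/((1-qq\<^sup>2)*(\<Delta> k)\<^sup>2)"
proof -
  note I = invariant[OF M pos]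
  have Dk: "\<Delta> k > 0" using pos by simp
  have "psi k \<le> CC / (\<Delta> k)\<^sup>2" using psi_le[OF pos] I by simp
  thus "real (NN k) \<le> CC * (TT k + 1/(\<Delta> k)\<^sup>2)" using I by (simp add: algebra_simps)
  have q2: "qq\<^sup>2 < 1" using qq_bounds by (simp add: power_less_one_iff)
  have "TT k * (\<Delta> k)\<^sup>2 \<le> qq\<^sup>2/(1-qq\<^sup>2)" using I by simp
  hence "TT k \<le> qq\<^sup>2/(1-qq\<^sup>2) / (\<Delta> k)\<^sup>2" using Dk by (subst pos_le_divide_eq) auto
  hence "TT k + 1/(\<Delta> k)\<^sup>2 \<le> qq\<^sup>2/(1-qq\<^sup>2) / (\<Delta> k)\<^sup>2 + 1/(\<Delta> k)\<^sup>2" by simp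
  also have "\<dots> = 1/((1-qq\<^sup>2)*(\<Delta> k)\<^sup>2)" using q2 Dk by (simp add: field_simps)
  finally show "TT k + 1/(\<Delta> k)\<^sup>2 \<le> 1/((1-qq\<^sup>2)*(\<Delta> k)\<^sup>2)" .
qed

lemma bound_eps:
  assumes "0 < \<epsilon>" "\<epsilon> < \<Delta> k"
  shows "1/((1-qq\<^sup>2)*(\<Delta> k)\<^sup>2) \<le> 1/((1-qq\<^sup>2)*\<epsilon>\<^sup>2)"
proof -
  have q2: "0 < 1 - qq\<^sup>2" using qq_bounds by (simp add: power_less_one_iff)
  have "\<epsilon>\<^sup>2 \<le> (\<Delta> k)\<^sup>2" using assms by (intro power_mono) auto
  hence "(1-qq\<^sup>2)*\<epsilon>\<^sup>2 \<le> (1-qq\<^sup>2)*(\<Delta> k)\<^sup>2" using q2 by (intro mult_left_mono) auto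
  thus ?thesis using q2 assms by (intro divide_left_mono) auto
qed

end


theorem theorem5:
  fixes f :: "'a::euclidean_space \<Rightarrow> real"
    and g :: "'a \<Rightarrow> 'a"
    and M \<beta> D2 \<epsilon> :: real
    and x z :: "nat \<Rightarrow> 'a"
    and fm :: "nat \<Rightarrow> 'a \<Rightarrow> real"
    and \<rho> :: "nat \<Rightarrow> real"
  assumes convex: "convex_on UNIV f"
    and lipschitz: "M-lipschitz_on UNIV f"
    and Xstar_nonempty: "Xstar f \<noteq> {}"
    and subgrad_oracle: "\<forall>y. is_subgradient f y (g y)"
    and beta: "0 < \<beta>" "\<beta> < 1"
    and D2_pos: "D2 > 0"
    and D2_bound: "\<forall>y. f y \<le> f (x 0) \<longrightarrow> (infdist y (Xstar f))\<^sup>2 \<le> D2"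
    and init_z: "z 0 = x 0"
    and init_model: "fm 0 = (\<lambda>w. f (x 0) + inner (g (x 0)) (w - x 0))"
    and stepsize: "\<forall>k. \<rho> k = (f (x k) - fstar f) / D2"
    and run: "\<forall>k. f (x k) > fstar f \<longrightarrow> pbm_step f g \<beta> x z fm \<rho> k"
    and eps: "0 < \<epsilon>" "\<epsilon> \<le> f (x 0) - fstar f"
  shows "\<exists>K. f (x K) - fstar f \<le> \<epsilon> \<and> (\<forall>j<K. f (x j) - fstar f > \<epsilon>) \<and>
     real (card {k. k < K \<and> pbm_descent f \<beta> x z fm k})
       \<le> real_of_int \<lceil>2 * ln ((f (x 0) - fstar f) / \<epsilon>) / \<beta>\<rceil> \<and>
     real (card {k. k < K \<and> \<not> pbm_descent f \<beta> x z fm k})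
       \<le> (1 / (1 - (1 - \<beta> / 2)\<^sup>2)) * (8 * M\<^sup>2 * D2 / ((1 - \<beta>)\<^sup>2 * \<epsilon>\<^sup>2))"
proof -
  interpret P: pbm f g M \<beta> D2 x z fm \<rho>
    using lipschitz Xstar_nonempty subgrad_oracle beta D2_pos D2_bound init_model stepsize run
    by unfold_locales auto
  have Mpos: "M > 0"
  proof (rule ccontr)
    assume "\<not> M > 0"
    hence M0: "M = 0" using P.M_nonneg by simp
    obtain p where p: "f p = fstar f" "dist (x 0) p = infdist (x 0) (Xstar f)" using P.nearest by blast
    have "f (x 0) - f p \<le> M * norm (x 0 - p)" by (rule P.lip)
    thus False using M0 p eps by simp
  qed
  have q2: "0 < 1 - P.qq\<^sup>2" using P.qq_bounds by (simp add: power_less_one_iff)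
  have ex: "\<exists>k. f (x k) - fstar f \<le> \<epsilon>"
  proof (rule ccontr)
    assume "\<not> ?thesis"
    hence all: "\<And>k. f (x k) - fstar f > \<epsilon>" by (meson not_le)
    have pos: "\<forall>j\<le>k. f (x j) - fstar f > 0" for k by (intro allI impI less_trans[OF eps(1) all])
    have D0: "f (x 0) - fstar f > 0" using pos by blast
    obtain n0 where n0: "P.qq^n0 < \<epsilon> / (f (x 0) - fstar f)"
      using real_arch_pow_inv[of "\<epsilon> / (f (x 0) - fstar f)" P.qq] P.qq_bounds eps D0 by auto
    define B where "B = P.CC / ((1 - P.qq\<^sup>2) * \<epsilon>\<^sup>2)"
    have dd_lt: "P.dd k < n0" for k
    proof (rule ccontr)
      assume "\<not> P.dd k < n0"
      hence "P.qq^(P.dd k) \<le> P.qq^n0" using P.qq_bounds by (intro power_decreasing) auto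
      hence "P.qq^(P.dd k) * (f (x 0) - fstar f) \<le> P.qq^n0 * (f (x 0) - fstar f)"
        using D0 by (intro mult_right_mono) auto
      moreover have "P.qq^n0 * (f (x 0) - fstar f) < \<epsilon>" using n0 D0 by (simp add: pos_less_divide_eq)
      ultimately have "P.qq^(P.dd k) * (f (x 0) - fstar f) < \<epsilon>" by linarith
      moreover have "f (x k) - fstar f \<le> P.qq^(P.dd k) * (f (x 0) - fstar f)"
        using P.invariant[OF Mpos pos] by blast
      ultimately show False using all[of k] by simp
    qed
    have NN_le: "real (P.NN k) \<le> B" for k
    proof -
      have C0: "P.CC \<ge> 0" unfolding P.CC_def using D2_pos by simp
      have "real (P.NN k) \<le> P.CC * (P.TT k + 1/(f (x k) - fstar f)\<^sup>2)" using P.bound_S(1)[OF Mpos pos] .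
      also have "\<dots> \<le> P.CC * (1/((1-P.qq\<^sup>2)*\<epsilon>\<^sup>2))"
        by (rule mult_left_mono[OF order.trans[OF P.bound_S(2)[OF Mpos pos] P.bound_eps[OF eps(1) all]] C0])
      finally show ?thesis unfolding B_def by simp
    qed
    have split: "P.dd k + P.NN k = k" for k
    proof -
      have "{j. j < k \<and> pbm_descent f \<beta> x z fm j} \<union> {j. j < k \<and> \<not> pbm_descent f \<beta> x z fm j} = {..<k}" by auto
      moreover have "card ({j. j < k \<and> pbm_descent f \<beta> x z fm j} \<union> {j. j < k \<and> \<not> pbm_descent f \<beta> x z fm j})
        = card {j. j < k \<and> pbm_descent f \<beta> x z fm j} + card {j. j < k \<and> \<not> pbm_descent f \<beta> x z fm j}"
        by (rule card_Un_disjoint) auto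
      ultimately show ?thesis unfolding P.dd_def P.NN_def by simp
    qed
    define k where "k = n0 + nat \<lceil>B\<rceil> + 1"
    have "real k = real (P.dd k) + real (P.NN k)" using split[of k] by linarith
    also have "\<dots> < real n0 + B + 1" using dd_lt[of k] NN_le[of k] by simp
    also have "\<dots> \<le> real k" unfolding k_def by linarith
    finally show False by simp
  qed
  define K where "K = (LEAST k. f (x k) - fstar f \<le> \<epsilon>)"
  have K1: "f (x K) - fstar f \<le> \<epsilon>" unfolding K_def using ex by (rule LeastI_ex)
  have K2: "\<forall>j<K. f (x j) - fstar f > \<epsilon>" unfolding K_def using not_less_Least by force
  have rhs2: "0 \<le> (1 / (1 - (1 - \<beta> / 2)\<^sup>2)) * (8 * M\<^sup>2 * D2 / ((1 - \<beta>)\<^sup>2 * \<epsilon>\<^sup>2))"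
    using q2 D2_pos unfolding P.qq_def by simp
  have c0: "0 \<le> 2 * ln ((f (x 0) - fstar f) / \<epsilon>) / \<beta>" using eps beta by simp
  show ?thesis
  proof (cases K)
    case 0
    have "0 \<le> real_of_int \<lceil>2 * ln ((f (x 0) - fstar f) / \<epsilon>) / \<beta>\<rceil>" using c0 by linarith
    thus ?thesis using K1 K2 rhs2 0 by (intro exI[of _ K]) simp
  next
    case (Suc m)
    have pos: "\<forall>j\<le>m. f (x j) - fstar f > 0"
    proof (intro allI impI)
      fix j assume "j \<le> m"
      hence "j < K" using Suc by simp
      thus "f (x j) - fstar f > 0" using K2 eps(1) less_trans by blast
    qed
    have gm: "f (x m) - fstar f > \<epsilon>" using K2 Suc by simp
    have dm: "pbm_descent f \<beta> x z fm m"
    proof (rule ccontr)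
      assume "\<not> pbm_descent f \<beta> x z fm m"
      hence "x (Suc m) = x m" using P.null_same pos by simp
      thus False using K1 gm Suc by simp
    qed
    have ddK: "P.dd K = P.dd m + 1" unfolding P.dd_def Suc using card_Suc_split[of m "pbm_descent f \<beta> x z fm"] dm by simp
    have NNK: "P.NN K = P.NN m" unfolding P.NN_def Suc using card_Suc_split[of m "\<lambda>j. \<not> pbm_descent f \<beta> x z fm j"] dm by simp
    note I = P.invariant[OF Mpos pos]
    have "\<epsilon> < P.qq^(P.dd m) * (f (x 0) - fstar f)" using I gm by linarith
    hence "real (P.dd m) < 2 * ln ((f (x 0) - fstar f) / \<epsilon>) / \<beta>"
      using desc_count[OF eps(1) _ beta] unfolding P.qq_def by blast
    hence "int (P.dd m) < \<lceil>2 * ln ((f (x 0) - fstar f) / \<epsilon>) / \<beta>\<rceil>" by (simp add: less_ceiling_iff)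
    hence D: "real (P.dd K) \<le> real_of_int \<lceil>2 * ln ((f (x 0) - fstar f) / \<epsilon>) / \<beta>\<rceil>" using ddK by linarith
    have C0: "P.CC \<ge> 0" unfolding P.CC_def using D2_pos by simp
    have "real (P.NN K) \<le> P.CC * (P.TT m + 1/(f (x m) - fstar f)\<^sup>2)" using NNK P.bound_S(1)[OF Mpos pos] by simp
    also have "\<dots> \<le> P.CC * (1/((1-P.qq\<^sup>2)*\<epsilon>\<^sup>2))"
      by (rule mult_left_mono[OF order.trans[OF P.bound_S(2)[OF Mpos pos] P.bound_eps[OF eps(1) gm]] C0])
    also have "\<dots> = (1 / (1 - P.qq\<^sup>2)) * (P.CC / \<epsilon>\<^sup>2)" by simp
    also have "\<dots> = (1 / (1 - (1 - \<beta> / 2)\<^sup>2)) * (8 * M\<^sup>2 * D2 / ((1 - \<beta>)\<^sup>2 * \<epsilon>\<^sup>2))"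
      unfolding P.CC_def P.qq_def by simp
    finally have N: "real (P.NN K) \<le> (1 / (1 - (1 - \<beta> / 2)\<^sup>2)) * (8 * M\<^sup>2 * D2 / ((1 - \<beta>)\<^sup>2 * \<epsilon>\<^sup>2))" .
    show ?thesis using K1 K2 D N unfolding P.dd_def P.NN_def by blast
  qed
qed

end
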